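(* If $X$ is a proper geodesic metric space, then its Freudenthal compactification coincides with its coarse Freudenthal compactification $CF(X)$ (i.e. the identity of $X$ extends to a homeomorphism between them).
   Context: The Freudenthal compactification of $X$ is $X\cup\mathrm{Ends}(X)$, where a Freudenthal end is a decreasing sequence $\{U_i\}_{i\ge1}$ with $U_i$ a component of $X\setminus K_i$, for an exhaustion of $X$ by compact sets $K_i\subset\operatorname{int}(K_{i+1})$; the topology has as basis the open subsets of $X$ with compact closure and the sets consisting of a component $U$ of some $X\setminus K_i$ together with all ends containing $U$. A glacial scale on $X$ is a sequence $\mathcal S=\{(K_i,n_i)\}_{i\ge1}$, $K_i$ bounded subsets, $n_i$ natural numbers, such that for every bounded $K$ and $r>0$ there is $i$ with $K\subset K_i$, $n_i>r$; an $\mathcal S$-chain is a finite sequence $x_1,\dots,x_n$ with, for each $i\le n-1$, some $m$ such that $x_i,x_{i+1}\notin K_m$ and $d(x_i,x_{i+1})\le n_m$; $f:X\to\mathbb R$ is glacially oscillating if for every $\epsilon>0$ there is a glacial scale $\mathcal S$ with $|f(x_1)-f(x_n)|<\epsilon$ for all $\mathcal S$-chains. The coarse Freudenthal compactification $CF(X)$ of a proper metric space $X$ is the compactification induced by all continuous glacially oscillating functions $X\to[0,1]$. *)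

theory Defs
  imports "HOL-Analysis.Analysis"
begin

section \<open>Proper geodesic metric spaces (the whole type is the space X)\<close>

definition proper_metric_space :: "'a::metric_space itself \<Rightarrow> bool" where
  "proper_metric_space _ \<longleftrightarrow> (\<forall>S::'a set. bounded S \<and> closed S \<longrightarrow> compact S)"

definition geodesic_metric_space :: "'a::metric_space itself \<Rightarrow> bool" where
  "geodesic_metric_space _ \<longleftrightarrow>
     (\<forall>x y::'a. \<exists>\<gamma>::real \<Rightarrow> 'a. \<gamma> 0 = x \<and> \<gamma> (dist x y) = y \<and>
        (\<forall>s\<in>{0..dist x y}. \<forall>t\<in>{0..dist x y}. dist (\<gamma> s) (\<gamma> t) = \<bar>s - t\<bar>))"

definition exhaustion :: "(nat \<Rightarrow> 'a::metric_space set) \<Rightarrow> bool" where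
  "exhaustion K \<longleftrightarrow> (\<forall>i. compact (K i) \<and> K i \<subseteq> interior (K (Suc i))) \<and> (\<Union>i. K i) = UNIV"

definition freudenthal_ends :: "(nat \<Rightarrow> 'a::metric_space set) \<Rightarrow> (nat \<Rightarrow> 'a set) set" where
  "freudenthal_ends K = {U. (\<forall>i. U i \<in> components (- K i)) \<and> (\<forall>i. U (Suc i) \<subseteq> U i)}"

text \<open>The basis of the topology of X \<union> Ends(X): points of X are Inl x, ends are Inr e.\<close>
definition freudenthal_basis :: "(nat \<Rightarrow> 'a::metric_space set) \<Rightarrow> ('a + (nat \<Rightarrow> 'a set)) set set" where
  "freudenthal_basis K =
     {Inl ` V | V. open V \<and> compact (closure V)} \<union>
     {Inl ` U \<union> Inr ` {e \<in> freudenthal_ends K. \<exists>j. e j = U} | U i. U \<in> components (- K i)}"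

definition freudenthal_compactification ::
    "(nat \<Rightarrow> 'a::metric_space set) \<Rightarrow> ('a + (nat \<Rightarrow> 'a set)) topology" where
  "freudenthal_compactification K = topology_generated_by (freudenthal_basis K)"

definition glacial_scale :: "(nat \<Rightarrow> 'a::metric_space set \<times> nat) \<Rightarrow> bool" where
  "glacial_scale S \<longleftrightarrow> (\<forall>i. bounded (fst (S i))) \<and>
     (\<forall>K r. bounded K \<and> r > (0::real) \<longrightarrow> (\<exists>i. K \<subseteq> fst (S i) \<and> real (snd (S i)) > r))"

definition glacial_chain :: "(nat \<Rightarrow> 'a::metric_space set \<times> nat) \<Rightarrow> 'a list \<Rightarrow> bool" where
  "glacial_chain S xs \<longleftrightarrow> xs \<noteq> [] \<and>
     (\<forall>i. Suc i < length xs \<longrightarrow>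
        (\<exists>m. xs ! i \<notin> fst (S m) \<and> xs ! Suc i \<notin> fst (S m) \<and>
             dist (xs ! i) (xs ! Suc i) \<le> real (snd (S m))))"

definition glacially_oscillating :: "('a::metric_space \<Rightarrow> real) \<Rightarrow> bool" where
  "glacially_oscillating f \<longleftrightarrow>
     (\<forall>\<epsilon>>0. \<exists>S. glacial_scale S \<and>
        (\<forall>xs. glacial_chain S xs \<longrightarrow> \<bar>f (hd xs) - f (last xs)\<bar> < \<epsilon>))"

definition CF_functions :: "('a::metric_space \<Rightarrow> real) set" where
  "CF_functions = {f. continuous_on UNIV f \<and> range f \<subseteq> {0..1} \<and> glacially_oscillating f}"

definition CF_embed :: "'a::metric_space \<Rightarrow> (('a \<Rightarrow> real) \<Rightarrow> real)" where
  "CF_embed x = restrict (\<lambda>f. f x) CF_functions"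

definition CF_cube :: "(('a::metric_space \<Rightarrow> real) \<Rightarrow> real) topology" where
  "CF_cube = product_topology (\<lambda>_. top_of_set {0..1}) CF_functions"

definition coarse_freudenthal_compactification :: "(('a::metric_space \<Rightarrow> real) \<Rightarrow> real) topology" where
  "coarse_freudenthal_compactification =
     subtopology CF_cube (CF_cube closure_of (range CF_embed))"

end

theory Submission
  imports Defs
begin

locale FS =
  fixes K :: "nat \<Rightarrow> 'a::metric_space set"
  assumes proper: "proper_metric_space TYPE('a)"
    and geo: "geodesic_metric_space TYPE('a)"
    and exh: "exhaustion K"
begin

lemma bc_compact: "bounded (S::'a set) \<Longrightarrow> closed S \<Longrightarrow> compact S"
  using proper unfolding proper_metric_space_def by blast

lemma cball_compact: "compact (cball (x::'a) r)"
  by (rule bc_compact) auto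

lemma infdist_att:
  fixes X :: "'a set"
  assumes cl: "closed X" and ne: "X \<noteq> {}"
  obtains x where "x \<in> X" "infdist y X = dist y x"
proof -
  obtain x0 where x0: "x0 \<in> X" using ne by blast
  let ?C = "X \<inter> cball y (dist y x0)"
  have "compact ?C" using cl by (intro bc_compact) (auto intro: bounded_subset[OF bounded_cball])
  moreover have "?C \<noteq> {}" using x0 by auto
  moreover have "continuous_on ?C (dist y)" by (intro continuous_intros)
  ultimately obtain x where x: "x \<in> ?C" "\<forall>z\<in>?C. dist y x \<le> dist y z"
    using continuous_attains_inf by blast
  have all: "\<And>z. z \<in> X \<Longrightarrow> dist y x \<le> dist y z"
  proof -
    fix z assume z: "z \<in> X"
    show "dist y x \<le> dist y z"
    proof (cases "z \<in> cball y (dist y x0)")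
      case True then show ?thesis using x z by blast
    next
      case False
      then have "dist y z > dist y x0" by simp
      moreover have "dist y x \<le> dist y x0" using x x0 by auto
      ultimately show ?thesis by simp
    qed
  qed
  have "x \<in> X" using x by blast
  moreover have "infdist y X = dist y x"
    by (metis all \<open>x \<in> X\<close> antisym ne cINF_greatest infdist_def infdist_le)
  ultimately show ?thesis using that by blast
qed

lemma geo_seg:
  fixes x y :: 'a
  assumes a: "0 \<le> a" "a \<le> dist x y"
  shows "\<exists>G w. connected G \<and> x \<in> G \<and> w \<in> G \<and> dist x w = a \<and> dist w y = dist x y - a
           \<and> (\<forall>z\<in>G. dist x z \<le> a)"
proof -
  obtain \<gamma> :: "real \<Rightarrow> 'a" where g0: "\<gamma> 0 = x" and gd: "\<gamma> (dist x y) = y"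
    and gi: "\<forall>s\<in>{0..dist x y}. \<forall>t\<in>{0..dist x y}. dist (\<gamma> s) (\<gamma> t) = \<bar>s - t\<bar>"
    using geo unfolding geodesic_metric_space_def by blast
  have cont: "continuous_on {0..a} \<gamma>"
    unfolding continuous_on_iff
  proof (intro ballI allI impI)
    fix s e assume s: "s \<in> {0..a}" and e: "(0::real) < e"
    show "\<exists>d>0. \<forall>t\<in>{0..a}. dist t s < d \<longrightarrow> dist (\<gamma> t) (\<gamma> s) < e"
    proof (intro exI[of _ e] conjI ballI impI)
      fix t assume t: "t \<in> {0..a}" and "dist t s < e"
      moreover have "dist (\<gamma> t) (\<gamma> s) = \<bar>t - s\<bar>" using gi s t a by auto
      ultimately show "dist (\<gamma> t) (\<gamma> s) < e" by (simp add: dist_real_def)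
    qed (rule e)
  qed
  show ?thesis
  proof (intro exI conjI)
    show "connected (\<gamma> ` {0..a})" by (rule connected_continuous_image[OF cont]) simp
    show "x \<in> \<gamma> ` {0..a}" using g0 a by force
    show "\<gamma> a \<in> \<gamma> ` {0..a}" using a by force
    show "dist x (\<gamma> a) = a" proof -
      have "dist (\<gamma> 0) (\<gamma> a) = \<bar>0 - a\<bar>" using gi a by auto
      then show ?thesis using g0 a by simp
    qed
    show "dist (\<gamma> a) y = dist x y - a"
    proof -
      have "dist (\<gamma> a) (\<gamma> (dist x y)) = \<bar>a - dist x y\<bar>" using gi a by auto
      then show ?thesis using gd a by simp
    qed
    show "\<forall>z\<in>\<gamma> ` {0..a}. dist x z \<le> a"
    proof
      fix z assume "z \<in> \<gamma> ` {0..a}"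
      then obtain t where t: "t \<in> {0..a}" "z = \<gamma> t" by auto
      then have "dist (\<gamma> 0) (\<gamma> t) = \<bar>0 - t\<bar>" using gi a by auto
      then show "dist x z \<le> a" using t g0 by auto
    qed
  qed
qed

lemma connected_ball: "connected (ball (x::'a) r)"
proof -
  let ?F = "{G. connected G \<and> x \<in> G \<and> G \<subseteq> ball x r}"
  have "ball x r = \<Union>?F"
  proof
    show "ball x r \<subseteq> \<Union>?F"
    proof
      fix y assume y: "y \<in> ball x r"
      obtain G w where G: "connected G" "x \<in> G" "w \<in> G" "dist x w = dist x y"
        "dist w y = dist x y - dist x y" "\<forall>z\<in>G. dist x z \<le> dist x y"
        using geo_seg[of "dist x y" x y] by auto
      have "w = y" using G(5) by simp
      moreover have "G \<subseteq> ball x r" using G(6) y by (auto simp: dist_commute) 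
      ultimately show "y \<in> \<Union>?F" using G by blast
    qed
  qed auto
  moreover have "connected (\<Union>?F)"
  proof (cases "r > 0")
    case True
    then show ?thesis by (intro connected_Union) auto
  next
    case False
    then have "\<Union>?F = {}" by auto
    then show ?thesis by (metis connected_empty)
  qed
  ultimately show ?thesis by simp
qed

lemma connected_univ: "connected (UNIV::'a set)"
proof -
  obtain x :: 'a where True by blast
  have "UNIV = (\<Union>n::nat. ball x (real n + 1))"
  proof (safe)
    fix y show "y \<in> (\<Union>n::nat. ball x (real n + 1))"
      proof -
      obtain n :: nat where "dist x y < real n" using reals_Archimedean2 by blast
      then have "y \<in> ball x (real n + 1)" by simp
      then show ?thesis by blast
    qed
  qed auto
  moreover have "connected (\<Union>n::nat. ball x (real n + 1))"
  proof (rule connected_Union)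
    have "x \<in> (\<Inter>n::nat. ball x (real n + 1))" by simp
    then show "\<Inter> (range (\<lambda>n::nat. ball x (real n + 1))) \<noteq> {}" by blast
  qed (auto simp: connected_ball)
  ultimately show ?thesis by simp
qed

lemma open_component: "open S \<Longrightarrow> C \<in> components S \<Longrightarrow> open (C::'a set)"
proof (unfold open_dist, intro ballI)
  fix x assume S: "\<forall>x\<in>S. \<exists>e>0. \<forall>y. dist y x < e \<longrightarrow> y \<in> S" and C: "C \<in> components S" and x: "x \<in> C"
  have "x \<in> S" using C x in_components_subset by blast
  then obtain e where e: "e > 0" "\<forall>y. dist y x < e \<longrightarrow> y \<in> S" using S by blast
  have "ball x e \<subseteq> C"
    by (rule components_maximal[OF C connected_ball]) (use e x in \<open>auto simp: dist_commute\<close>)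
  then show "\<exists>e>0. \<forall>y. dist y x < e \<longrightarrow> y \<in> C" using e(1) by (metis dist_commute mem_ball subsetD)
qed

end

context FS begin

lemma K_compact: "compact (K i)"
  using exh unfolding exhaustion_def by blast

lemma K_Suc: "K i \<subseteq> interior (K (Suc i))"
  using exh unfolding exhaustion_def by blast

lemma K_union: "(\<Union>i. K i) = UNIV"
  using exh unfolding exhaustion_def by blast

lemma K_mono: "i \<le> j \<Longrightarrow> K i \<subseteq> K j"
  by (rule lift_Suc_mono_le[of K]) (use K_Suc interior_subset in blast)+

lemma K_closed: "closed (K i)" using K_compact compact_imp_closed by blast
lemma K_bounded: "bounded (K i)" using K_compact compact_imp_bounded by blast

lemma eventually_contains:
  assumes "compact C"
  shows "\<exists>N. \<forall>i\<ge>N. C \<subseteq> K i"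
proof -
  have "C \<subseteq> (\<Union>i. interior (K (Suc i)))"
  proof
    fix x assume "x \<in> C"
    obtain i where "x \<in> K i" using K_union by blast
    then show "x \<in> (\<Union>i. interior (K (Suc i)))" using K_Suc by blast
  qed
  then obtain F where F: "finite F" "C \<subseteq> (\<Union>i\<in>F. interior (K (Suc i)))"
    using compactE_image[OF assms, of UNIV "\<lambda>i. interior (K (Suc i))"] by auto
  show ?thesis
  proof (intro exI allI impI)
    fix i assume i: "Suc (Max (insert 0 F)) \<le> i"
    show "C \<subseteq> K i"
    proof
      fix x assume "x \<in> C"
      then obtain j where j: "j \<in> F" "x \<in> interior (K (Suc j))" using F by blast
      have "j \<le> Max (insert 0 F)" using F(1) j(1) by simp
      then have "Suc j \<le> i" using i by simp
      then show "x \<in> K i" using K_mono j(2) interior_subset by blast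
    qed
  qed
qed

lemma eventually_contains_ge:
  assumes "compact C"
  obtains N where "\<And>i. i \<ge> N \<Longrightarrow> C \<subseteq> K i" "N \<ge> M"
proof -
  obtain N where "\<forall>i\<ge>N. C \<subseteq> K i" using eventually_contains[OF assms] by blast
  then show ?thesis using that[of "max N M"] by auto
qed

lemma K_nonempty_eventually: "\<exists>N. \<forall>i\<ge>N. K i \<noteq> {}"
proof -
  obtain x :: 'a where True by blast
  obtain N where "\<forall>i\<ge>N. {x} \<subseteq> K i" using eventually_contains[of "{x}"] by auto
  then show ?thesis by blast
qed

lemma components_empty: "components (- {} :: 'a set) = {UNIV}"
  using connected_univ by (simp add: components_eq_sing_iff)

lemma end_comp: "e \<in> freudenthal_ends K \<Longrightarrow> e i \<in> components (- K i)"
  unfolding freudenthal_ends_def by blast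

lemma end_mono: "e \<in> freudenthal_ends K \<Longrightarrow> i \<le> j \<Longrightarrow> e j \<subseteq> e i"
  unfolding freudenthal_ends_def by (rule lift_Suc_antimono_le[of e]) blast+

lemma end_nonempty: "e \<in> freudenthal_ends K \<Longrightarrow> e i \<noteq> {}"
  using end_comp in_components_nonempty by blast

lemma end_disj: "e \<in> freudenthal_ends K \<Longrightarrow> e i \<inter> K i = {}"
  using end_comp in_components_subset by blast

lemma end_outside:
  assumes "compact C"
  shows "\<exists>N. \<forall>i\<ge>N. \<forall>e \<in> freudenthal_ends K. e i \<inter> C = {}"
proof -
  obtain N where "\<forall>i\<ge>N. C \<subseteq> K i" using eventually_contains[OF assms] by blast
  then show ?thesis using end_disj by blast
qed

lemma comp_eq:
  assumes e: "e \<in> freudenthal_ends K" and U: "U \<in> components (- K i)" and k: "i \<le> k"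
    and x: "x \<in> e k" "x \<in> U"
  shows "e i = U"
proof -
  have "x \<in> e i" using end_mono[OF e k] x by blast
  then show ?thesis using components_nonoverlap[OF end_comp[OF e] U] x by blast
qed

lemma pt_in: "e \<in> freudenthal_ends K \<Longrightarrow> (SOME x. x \<in> e i) \<in> e i"
  using end_nonempty[of e i] by (simp add: some_in_eq)

end

definition Lim_end :: "(nat \<Rightarrow> 'a set) \<Rightarrow> ('a \<Rightarrow> real) \<Rightarrow> real" where
  "Lim_end e f = lim (\<lambda>k. f (SOME x. x \<in> e k))"

lemma CF_cont: "f \<in> CF_functions \<Longrightarrow> continuous_on UNIV f"
  and CF_osc: "f \<in> CF_functions \<Longrightarrow> glacially_oscillating f"
  unfolding CF_functions_def by auto

lemma CF_range: "f \<in> CF_functions \<Longrightarrow> f x \<in> {0..1}"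
  unfolding CF_functions_def by (metis (mono_tags, lifting) mem_Collect_eq range_subsetD)

lemma chain_single: "glacial_chain S [x]"
  unfolding glacial_chain_def by auto

lemma chain_snoc:
  assumes "glacial_chain S xs"
    and "last xs \<notin> fst (S m)" "y \<notin> fst (S m)" "dist (last xs) y \<le> real (snd (S m))"
  shows "glacial_chain S (xs @ [y])"
  unfolding glacial_chain_def
proof (intro conjI allI impI)
  show "xs @ [y] \<noteq> []" by simp
  fix i assume i: "Suc i < length (xs @ [y])"
  have ne: "xs \<noteq> []" using assms(1) unfolding glacial_chain_def by blast
  show "\<exists>m. (xs @ [y]) ! i \<notin> fst (S m) \<and> (xs @ [y]) ! Suc i \<notin> fst (S m) \<and>
             dist ((xs @ [y]) ! i) ((xs @ [y]) ! Suc i) \<le> real (snd (S m))"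
  proof (cases "Suc i < length xs")
    case True
    then show ?thesis using assms(1) unfolding glacial_chain_def by (simp add: nth_append)
  next
    case False
    then have "i = length xs - 1" "Suc i = length xs" using i ne by auto
    then have "(xs @ [y]) ! i = last xs" "(xs @ [y]) ! Suc i = y"
      using ne by (auto simp: nth_append last_conv_nth)
    then show ?thesis using assms(2-4) by metis
  qed
qed

context FS begin

lemma osc:
  fixes f :: "'a \<Rightarrow> real"
  assumes f: "f \<in> CF_functions" and e: "\<epsilon> > 0"
  shows "\<exists>N. \<forall>i\<ge>N. \<forall>U\<in>components (- K i). \<forall>x\<in>U. \<forall>y\<in>U. \<bar>f x - f y\<bar> < \<epsilon>"
proof -
  obtain S where S: "glacial_scale S" and ch: "\<And>xs. glacial_chain S xs \<Longrightarrow> \<bar>f (hd xs) - f (last xs)\<bar> < \<epsilon>"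
    using CF_osc[OF f] e unfolding glacially_oscillating_def by blast
  obtain m where m: "real (snd (S m)) > 1"
    using S unfolding glacial_scale_def by (metis bounded_empty empty_subsetI zero_less_one)
  have "bounded (fst (S m))" using S unfolding glacial_scale_def by blast
  then have "compact (closure (fst (S m)))" by (intro bc_compact) auto
  then obtain N where N: "\<forall>i\<ge>N. closure (fst (S m)) \<subseteq> K i" using eventually_contains by blast
  show ?thesis
  proof (intro exI allI impI ballI)
    fix i U x y assume i: "N \<le> i" and U: "U \<in> components (- K i)" and x: "x \<in> U" and y: "y \<in> U"
    have B: "fst (S m) \<subseteq> K i" using N i closure_subset by blast
    have UK: "U \<subseteq> - K i" using U in_components_subset by blast
    let ?P = "\<lambda>z. \<exists>xs. glacial_chain S xs \<and> hd xs = x \<and> last xs = z"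
    have "?P y"
    proof (rule connected_induction_simple[of U x y ?P])
      show "connected U" using U in_components_connected by blast
      show "?P x" using chain_single[of S x] by (intro exI[of _ "[x]"]) simp
      fix a assume a: "a \<in> U"
      show "\<exists>T. openin (top_of_set U) T \<and> a \<in> T \<and> (\<forall>x'\<in>T. \<forall>y'\<in>T. ?P x' \<longrightarrow> ?P y')"
      proof (rule exI[of _ "U \<inter> ball a (1/2)"], intro conjI ballI impI)
        show "openin (top_of_set U) (U \<inter> ball a (1/2))" by (simp add: openin_open_Int)
        show "a \<in> U \<inter> ball a (1/2)" using a by simp
        fix x' y' assume x': "x' \<in> U \<inter> ball a (1/2)" and y': "y' \<in> U \<inter> ball a (1/2)" and P: "?P x'"
        then obtain xs where xs: "glacial_chain S xs" "hd xs = x" "last xs = x'" by blast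
        have "dist x' y' \<le> dist x' a + dist a y'" by (rule dist_triangle)
        also have "\<dots> < 1" using x' y' by (simp add: dist_commute)
        finally have d: "dist x' y' \<le> real (snd (S m))" using m by linarith
        have "x' \<notin> fst (S m)" "y' \<notin> fst (S m)" using x' y' UK B by auto
        then have "glacial_chain S (xs @ [y'])" using chain_snoc[OF xs(1)] xs(3) d by blast
        moreover have "hd (xs @ [y']) = x" using xs(1,2) unfolding glacial_chain_def by simp
        ultimately show "?P y'" by (intro exI[of _ "xs @ [y']"]) simp
      qed
    qed (use x y in auto)
    then show "\<bar>f x - f y\<bar> < \<epsilon>" using ch by blast
  qed
qed

lemma Lim_end_conv:
  fixes f :: "'a \<Rightarrow> real"
  assumes f: "f \<in> CF_functions" and e: "e \<in> freudenthal_ends K"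
  shows "(\<lambda>k. f (SOME x. x \<in> e k)) \<longlonglongrightarrow> Lim_end e f"
proof -
  have "Cauchy (\<lambda>k. f (SOME x. x \<in> e k))"
  proof (rule CauchyI)
    fix \<epsilon> :: real assume "0 < \<epsilon>"
    then obtain N where N: "\<forall>i\<ge>N. \<forall>U\<in>components (- K i). \<forall>x\<in>U. \<forall>y\<in>U. \<bar>f x - f y\<bar> < \<epsilon>"
      using osc[OF f] by blast
    show "\<exists>M. \<forall>m\<ge>M. \<forall>n\<ge>M. norm (f (SOME x. x \<in> e m) - f (SOME x. x \<in> e n)) < \<epsilon>"
    proof (intro exI allI impI)
      fix m n assume "N \<le> m" "N \<le> n"
      then have "(SOME x. x \<in> e m) \<in> e N" "(SOME x. x \<in> e n) \<in> e N"
        using pt_in[OF e] end_mono[OF e] by blast+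
      then show "norm (f (SOME x. x \<in> e m) - f (SOME x. x \<in> e n)) < \<epsilon>"
      proof -
        have "\<bar>f (SOME x. x \<in> e m) - f (SOME x. x \<in> e n)\<bar> < \<epsilon>"
          using N end_comp[OF e] \<open>(SOME x. x \<in> e m) \<in> e N\<close> \<open>(SOME x. x \<in> e n) \<in> e N\<close>
          by (meson order_refl)
        then show ?thesis by simp
      qed
    qed
  qed
  then show ?thesis unfolding Lim_end_def using Cauchy_convergent convergent_LIMSEQ_iff by blast
qed

lemma L_approx:
  fixes f :: "'a \<Rightarrow> real"
  assumes f: "f \<in> CF_functions" and eps: "\<epsilon> > 0"
  shows "\<exists>N. \<forall>i\<ge>N. \<forall>e\<in>freudenthal_ends K. \<forall>x\<in>e i. \<bar>f x - Lim_end e f\<bar> \<le> \<epsilon>"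
proof -
  obtain N where N: "\<forall>i\<ge>N. \<forall>U\<in>components (- K i). \<forall>x\<in>U. \<forall>y\<in>U. \<bar>f x - f y\<bar> < \<epsilon>"
    using osc[OF f eps] by blast
  show ?thesis
  proof (intro exI allI impI ballI)
    fix i e x assume i: "N \<le> i" and e: "e \<in> freudenthal_ends K" and x: "x \<in> e i"
    have lim: "(\<lambda>k. \<bar>f x - f (SOME x. x \<in> e k)\<bar>) \<longlonglongrightarrow> \<bar>f x - Lim_end e f\<bar>"
      by (intro tendsto_intros Lim_end_conv f e)
    show "\<bar>f x - Lim_end e f\<bar> \<le> \<epsilon>"
    proof (rule LIMSEQ_le_const2[OF lim], intro exI allI impI)
      fix k assume "i \<le> k"
      then have "(SOME x. x \<in> e k) \<in> e i" using pt_in[OF e] end_mono[OF e] by blast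
      then show "\<bar>f x - f (SOME x. x \<in> e k)\<bar> \<le> \<epsilon>" using N i end_comp[OF e] x by force
    qed
  qed
qed

lemma L_range:
  assumes f: "f \<in> CF_functions" and e: "e \<in> freudenthal_ends K"
  shows "Lim_end e f \<in> {0..1}"
proof -
  have lim: "(\<lambda>k. f (SOME x. x \<in> e k)) \<longlonglongrightarrow> Lim_end e f" by (rule Lim_end_conv[OF f e])
  have "0 \<le> Lim_end e f" by (rule LIMSEQ_le_const[OF lim]) (use CF_range[OF f] in auto)
  moreover have "Lim_end e f \<le> 1" by (rule LIMSEQ_le_const2[OF lim]) (use CF_range[OF f] in auto)
  ultimately show ?thesis by simp
qed

lemma L_const:
  assumes f: "f \<in> CF_functions" and e: "e \<in> freudenthal_ends K"
    and c: "\<forall>i\<ge>N. \<forall>x\<in>e i. f x = c"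
  shows "Lim_end e f = c"
proof -
  have lim: "(\<lambda>k. f (SOME x. x \<in> e k)) \<longlonglongrightarrow> Lim_end e f" by (rule Lim_end_conv[OF f e])
  have "eventually (\<lambda>k. f (SOME x. x \<in> e k) = c) sequentially"
    using c pt_in[OF e] unfolding eventually_sequentially by blast
  then have "(\<lambda>k. f (SOME x. x \<in> e k)) \<longlonglongrightarrow> c"
    by (rule tendsto_eventually)
  then show ?thesis using lim LIMSEQ_unique by blast
qed

end

lemma chain_const:
  assumes ch: "glacial_chain S xs"
    and step: "\<And>a b m. a \<notin> fst (S m) \<Longrightarrow> b \<notin> fst (S m) \<Longrightarrow> dist a b \<le> real (snd (S m)) \<Longrightarrow> f a = f b"
  shows "f (hd xs) = f (last xs)"
proof -
  have ne: "xs \<noteq> []" using ch unfolding glacial_chain_def by blast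
  have "\<forall>k. k < length xs \<longrightarrow> f (xs ! k) = f (xs ! 0)"
  proof (intro allI)
    fix k show "k < length xs \<longrightarrow> f (xs ! k) = f (xs ! 0)"
    proof (induction k)
      case (Suc k)
      show ?case
      proof
        assume k: "Suc k < length xs"
        then obtain m where "xs ! k \<notin> fst (S m)" "xs ! Suc k \<notin> fst (S m)"
          "dist (xs ! k) (xs ! Suc k) \<le> real (snd (S m))"
          using ch unfolding glacial_chain_def by blast
        then have "f (xs ! k) = f (xs ! Suc k)" by (rule step)
        then show "f (xs ! Suc k) = f (xs ! 0)" using Suc k by simp
      qed
    qed simp
  qed
  moreover have "length xs - 1 < length xs" using ne by simp
  ultimately have "f (xs ! (length xs - 1)) = f (xs ! 0)" by blast
  moreover have "hd xs = xs ! 0" "last xs = xs ! (length xs - 1)" using ne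
    by (auto simp: hd_conv_nth last_conv_nth)
  ultimately show ?thesis by simp
qed

lemma bounded_support_osc:
  fixes f :: "'a::metric_space \<Rightarrow> real"
  assumes R: "R \<ge> 0" and supp: "\<And>z. dist x z > R \<Longrightarrow> f z = 0"
  shows "glacially_oscillating f"
  unfolding glacially_oscillating_def
proof (intro allI impI)
  fix \<epsilon> :: real assume e: "\<epsilon> > 0"
  define S where "S = (\<lambda>m::nat. (cball x (R + real m), m))"
  have "glacial_scale S"
    unfolding glacial_scale_def
  proof (intro conjI allI impI)
    fix i show "bounded (fst (S i))" unfolding S_def by simp
  next
    fix A :: "'a set" and r :: real assume A: "bounded A \<and> r > 0"
    then obtain R' where R': "A \<subseteq> cball x R'" by (metis bounded_any_center mem_cball subsetI)
    obtain m :: nat where m: "real m > \<bar>R'\<bar> + r" using reals_Archimedean2 by blast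
    have "A \<subseteq> cball x (R + real m)"
    proof
      fix z assume "z \<in> A"
      then have "dist x z \<le> R'" using R' by auto
      then show "z \<in> cball x (R + real m)" using R m abs_ge_self[of R'] A by simp
    qed
    moreover have "real (snd (S m)) > r" unfolding S_def using m by simp
    ultimately show "\<exists>i. A \<subseteq> fst (S i) \<and> real (snd (S i)) > r" unfolding S_def by auto
  qed
  moreover have "\<bar>f (hd xs) - f (last xs)\<bar> < \<epsilon>" if "glacial_chain S xs" for xs
  proof -
    have "f (hd xs) = f (last xs)"
    proof (rule chain_const[OF that])
      fix a b m assume "a \<notin> fst (S m)" "b \<notin> fst (S m)"
      then have "dist x a > R" "dist x b > R" unfolding S_def by auto
      then show "f a = f b" using supp by simp
    qed
    then show ?thesis using e by simp
  qed
  ultimately show "\<exists>S. glacial_scale S \<and> (\<forall>xs. glacial_chain S xs \<longrightarrow> \<bar>f (hd xs) - f (last xs)\<bar> < \<epsilon>)"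
    by blast
qed

definition bump :: "'a::metric_space \<Rightarrow> real \<Rightarrow> 'a \<Rightarrow> real" where
  "bump x r z = max 0 (1 - dist z x / r)"

lemma bump_CF:
  assumes r: "r > 0"
  shows "bump x r \<in> CF_functions"
  unfolding CF_functions_def
proof (intro CollectI conjI)
  show "continuous_on UNIV (bump x r)" unfolding bump_def using r by (intro continuous_intros) auto
  show "range (bump x r) \<subseteq> {0..1}"
  proof (rule image_subsetI)
    fix z
    have "0 \<le> dist z x / r" using r by simp
    then show "bump x r z \<in> {0..1}" unfolding bump_def by (simp add: max_def)
  qed
  show "glacially_oscillating (bump x r)"
  proof (rule bounded_support_osc[of r x])
    fix z assume "dist x z > r"
    then have "dist z x / r > 1" using r by (simp add: dist_commute)
    then show "bump x r z = 0" unfolding bump_def by simp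
  qed (use r in simp)
qed

lemma bump_x: "r > 0 \<Longrightarrow> bump x r x = 1" unfolding bump_def by simp

lemma bump_pos: "bump x r z > 0 \<Longrightarrow> r > 0 \<Longrightarrow> dist z x < r"
proof (rule ccontr)
  assume a: "bump x r z > 0" "r > 0" "\<not> dist z x < r"
  then have "dist z x / r \<ge> 1" by (simp add: field_simps)
  then have "bump x r z = 0" unfolding bump_def by simp
  then show False using a by simp
qed

lemma bump_zero: "r > 0 \<Longrightarrow> z \<notin> cball x r \<Longrightarrow> bump x r z = 0"
  unfolding bump_def by (simp add: field_simps dist_commute)

context FS begin

lemma seg_same:
  fixes C :: "'a set"
  assumes U: "U \<in> components (- C)" and d: "infdist z C > dist z w"
  shows "z \<in> U \<longleftrightarrow> w \<in> U"
proof -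
  obtain G w' where G: "connected G" "z \<in> G" "w' \<in> G" "dist z w' = dist z w"
    "dist w' w = dist z w - dist z w" "\<forall>v\<in>G. dist z v \<le> dist z w"
    using geo_seg[of "dist z w" z w] by auto
  have "w' = w" using G(5) by simp
  have GC: "G \<subseteq> - C"
  proof
    fix v assume v: "v \<in> G"
    show "v \<in> - C"
    proof
      assume "v \<in> C"
      then have "infdist z C \<le> dist z v" by (rule infdist_le)
      then show False using G(6) v d by fastforce
    qed
  qed
  show ?thesis
  proof
    assume "z \<in> U"
    then have "G \<subseteq> U" using components_maximal[OF U G(1) GC] G(2) by blast
    then show "w \<in> U" using G(3) \<open>w' = w\<close> by blast
  next
    assume "w \<in> U"
    then have "G \<subseteq> U" using components_maximal[OF U G(1) GC] G(3) \<open>w' = w\<close> by blast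
    then show "z \<in> U" using G(2) by blast
  qed
qed

definition gfun :: "'a set \<Rightarrow> 'a \<Rightarrow> real" where
  "gfun U z = min 1 (infdist z (- U))"

lemma gfun_outside: "z \<notin> U \<Longrightarrow> gfun U z = 0"
  unfolding gfun_def by (simp add: infdist_zero)

lemma gfun_one:
  assumes U: "U \<in> components (- C)" and Cc: "closed C" and C: "C \<noteq> {}" and z: "z \<in> U"
    and d: "infdist z C \<ge> 1"
  shows "gfun U z = 1"
proof -
  have "open U" using open_component[OF _ U] Cc by (simp add: open_Compl)
  then have cl: "closed (- U)" by (simp add: closed_Compl)
  have ne: "- U \<noteq> {}" using C U in_components_subset by blast
  obtain w where w: "w \<in> - U" "infdist z (- U) = dist z w" using infdist_att[OF cl ne] by blast
  have "dist z w \<ge> 1"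
  proof (rule ccontr)
    assume "\<not> dist z w \<ge> 1"
    then have "infdist z C > dist z w" using d by simp
    then have "w \<in> U" using seg_same[OF U] z by blast
    then show False using w by blast
  qed
  then show ?thesis unfolding gfun_def using w by simp
qed

lemma gfun_pos:
  assumes U: "U \<in> components (- C)" and Cc: "closed C" and C: "C \<noteq> {}" and z: "z \<in> U"
  shows "gfun U z > 0"
proof -
  have "open U" using open_component[OF _ U] Cc by (simp add: open_Compl)
  then have cl: "closed (- U)" by (simp add: closed_Compl)
  have ne: "- U \<noteq> {}" using C U in_components_subset by blast
  have "infdist z (- U) > 0" using infdist_pos_not_in_closed[OF cl ne] z by simp
  then show ?thesis unfolding gfun_def by simp
qed

lemma gfun_CF:
  assumes U: "U \<in> components (- C)" and Cc: "compact C" and C: "C \<noteq> {}"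
  shows "gfun U \<in> CF_functions"
  unfolding CF_functions_def
proof (intro CollectI conjI)
  show "continuous_on UNIV (gfun U)" unfolding gfun_def by (rule continuous_on_min continuous_on_const continuous_on_infdist continuous_on_id)+
  show "range (gfun U) \<subseteq> {0..1}"
  proof (rule image_subsetI)
    fix z
    have "0 \<le> infdist z (- U)" by (rule infdist_nonneg)
    then show "gfun U z \<in> {0..1}" unfolding gfun_def by (simp add: min_def)
  qed
  show "glacially_oscillating (gfun U)"
    unfolding glacially_oscillating_def
  proof (intro allI impI)
    fix \<epsilon> :: real assume e: "\<epsilon> > 0"
    obtain k0 where k0: "k0 \<in> C" using C by blast
    have Ccl: "closed C" using Cc compact_imp_closed by blast
    obtain B where B: "\<forall>y\<in>C. dist k0 y \<le> B" using Cc compact_imp_bounded bounded_any_center by metis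
    define S where "S = (\<lambda>m::nat. ({z. infdist z C \<le> real m + 1}, m))"
    have "glacial_scale S"
      unfolding glacial_scale_def
    proof (intro conjI allI impI)
      fix i
      have "{z. infdist z C \<le> real i + 1} \<subseteq> cball k0 (B + real i + 1)"
      proof
        fix z assume z: "z \<in> {z. infdist z C \<le> real i + 1}"
        obtain y where y: "y \<in> C" "infdist z C = dist z y" using infdist_att[OF Ccl C] by blast
        have "dist k0 z \<le> dist k0 y + dist y z" by (rule dist_triangle)
        then show "z \<in> cball k0 (B + real i + 1)" using B y z by (auto simp: dist_commute)
      qed
      then show "bounded (fst (S i))" unfolding S_def using bounded_cball bounded_subset by auto
    next
      fix A :: "'a set" and r :: real assume A: "bounded A \<and> r > 0"
      then obtain R' where R': "\<forall>y\<in>A. dist k0 y \<le> R'" by (metis bounded_any_center)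
      obtain m :: nat where m: "real m > \<bar>R'\<bar> + r" using reals_Archimedean2 by blast
      have "A \<subseteq> {z. infdist z C \<le> real m + 1}"
      proof
        fix z assume "z \<in> A"
        then have "dist k0 z \<le> R'" using R' by blast
        moreover have "infdist z C \<le> dist z k0" using infdist_le[OF k0] by simp
        ultimately show "z \<in> {z. infdist z C \<le> real m + 1}" using m A abs_ge_self[of R'] by (simp add: dist_commute)
      qed
      moreover have "real (snd (S m)) > r" unfolding S_def using m by simp
      ultimately show "\<exists>i. A \<subseteq> fst (S i) \<and> real (snd (S i)) > r" unfolding S_def by auto
    qed
    moreover have "\<bar>gfun U (hd xs) - gfun U (last xs)\<bar> < \<epsilon>" if "glacial_chain S xs" for xs
    proof -
      have "gfun U (hd xs) = gfun U (last xs)"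
      proof (rule chain_const[OF that])
        fix a b m assume a: "a \<notin> fst (S m)" and b: "b \<notin> fst (S m)" and ab: "dist a b \<le> real (snd (S m))"
        have da: "infdist a C > real m + 1" and db: "infdist b C > real m + 1" using a b unfolding S_def by auto
        have "dist a b \<le> real m" using ab unfolding S_def by simp
        then have "a \<in> U \<longleftrightarrow> b \<in> U" using seg_same[OF U] da by simp
        moreover have "infdist a C \<ge> 1" "infdist b C \<ge> 1" using da db by simp_all
        ultimately show "gfun U a = gfun U b"
        proof (cases "a \<in> U")
          case True
          then have "b \<in> U" using \<open>a \<in> U \<longleftrightarrow> b \<in> U\<close> by blast
          then show ?thesis using gfun_one[OF U Ccl C True] gfun_one[OF U Ccl C \<open>b \<in> U\<close>]
            \<open>infdist a C \<ge> 1\<close> \<open>infdist b C \<ge> 1\<close> by simp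
        next
          case False
          then have "b \<notin> U" using \<open>a \<in> U \<longleftrightarrow> b \<in> U\<close> by blast
          then show ?thesis using gfun_outside False by simp
        qed
      qed
      then show ?thesis using e by simp
    qed
    ultimately show "\<exists>S. glacial_scale S \<and> (\<forall>xs. glacial_chain S xs \<longrightarrow> \<bar>gfun U (hd xs) - gfun U (last xs)\<bar> < \<epsilon>)"
      by blast
  qed
qed

end

lemma limitin_in_closure:
  assumes "limitin X \<sigma> l sequentially" "\<And>n. \<sigma> n \<in> S"
  shows "l \<in> X closure_of S"
  unfolding in_closure_of
proof (intro conjI allI impI)
  show "l \<in> topspace X" using assms(1) limitin_topspace by metis
  fix T assume "l \<in> T \<and> openin X T"
  then obtain N where "\<forall>n\<ge>N. \<sigma> n \<in> T" using assms(1) unfolding limitin_sequentially by blast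
  then show "\<exists>y. y \<in> S \<and> y \<in> T" using assms(2) by blast
qed

context FS begin

abbreviation "FT \<equiv> freudenthal_compactification K"

definition nbhd :: "'a set \<Rightarrow> ('a + (nat \<Rightarrow> 'a set)) set" where
  "nbhd U = Inl ` U \<union> Inr ` {e \<in> freudenthal_ends K. \<exists>j. e j = U}"

definition hmap :: "'a + (nat \<Rightarrow> 'a set) \<Rightarrow> ('a \<Rightarrow> real) \<Rightarrow> real" where
  "hmap q = (case q of Inl x \<Rightarrow> CF_embed x | Inr e \<Rightarrow> restrict (Lim_end e) CF_functions)"

definition phi :: "('a \<Rightarrow> real) \<Rightarrow> 'a + (nat \<Rightarrow> 'a set) \<Rightarrow> real" where
  "phi f q = (case q of Inl x \<Rightarrow> f x | Inr e \<Rightarrow> Lim_end e f)"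

lemma hmap_phi: "f \<in> CF_functions \<Longrightarrow> hmap q f = phi f q"
  unfolding hmap_def phi_def CF_embed_def by (cases q) auto

lemma basis_open: "B \<in> freudenthal_basis K \<Longrightarrow> openin FT B"
  unfolding freudenthal_compactification_def
  by (simp add: openin_topology_generated_by_iff generate_topology_on.Basis)

lemma open_Inl: "open V \<Longrightarrow> compact (closure V) \<Longrightarrow> openin FT (Inl ` V)"
  by (rule basis_open) (auto simp: freudenthal_basis_def)

lemma open_nbhd: "U \<in> components (- K i) \<Longrightarrow> openin FT (nbhd U)"
  by (rule basis_open) (auto simp: freudenthal_basis_def nbhd_def)

lemma compact_closure_sub: "closure (V::'a set) \<subseteq> cball x r \<Longrightarrow> compact (closure V)"
  by (rule bc_compact) (auto intro: bounded_subset[OF bounded_cball])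

lemma compact_closure_ball: "compact (closure (ball (x::'a) r))"
  by (rule compact_closure_sub[of _ x r]) (metis closed_cball closure_minimal ball_subset_cball)

lemma topspace_FT: "topspace FT = range Inl \<union> Inr ` freudenthal_ends K"
proof
  show "topspace FT \<subseteq> range Inl \<union> Inr ` freudenthal_ends K"
    unfolding freudenthal_compactification_def topology_generated_by_topspace freudenthal_basis_def
    by blast
next
  show "range Inl \<union> Inr ` freudenthal_ends K \<subseteq> topspace FT"
  proof
    fix q :: "'a + (nat \<Rightarrow> 'a set)" assume "q \<in> range Inl \<union> Inr ` freudenthal_ends K"
    then consider x where "q = Inl x" | e where "q = Inr e" "e \<in> freudenthal_ends K" by blast
    then show "q \<in> topspace FT"
    proof cases
      case 1
      have "openin FT (Inl ` ball x 1)" by (rule open_Inl) (auto simp: compact_closure_ball)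
      then show ?thesis using 1 openin_subset by fastforce
    next
      case 2
      have "openin FT (nbhd (e 0))" by (rule open_nbhd[OF end_comp[OF 2(2)]])
      moreover have "q \<in> nbhd (e 0)" unfolding nbhd_def using 2 by blast
      ultimately show ?thesis using openin_subset by blast
    qed
  qed
qed

lemma phi_range: "f \<in> CF_functions \<Longrightarrow> q \<in> topspace FT \<Longrightarrow> phi f q \<in> {0..1}"
proof -
  assume f: "f \<in> CF_functions" and "q \<in> topspace FT"
  then consider x where "q = Inl x" | e where "q = Inr e" "e \<in> freudenthal_ends K"
    using topspace_FT by blast
  then show ?thesis
  proof cases
    case 1 then show ?thesis using CF_range[OF f, of x] unfolding phi_def by simp
  next
    case 2 then show ?thesis using L_range[OF f 2(2)] unfolding phi_def by simp
  qed
qed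

lemma phi_cont:
  assumes f: "f \<in> CF_functions"
  shows "continuous_map FT euclideanreal (phi f)"
  unfolding continuous_map_def
proof (intro conjI allI impI)
  show "phi f \<in> topspace FT \<rightarrow> topspace euclideanreal" by simp
  fix T :: "real set" assume "openin euclideanreal T"
  then have T: "open T" by simp
  show "openin FT {q \<in> topspace FT. phi f q \<in> T}"
  proof (subst openin_subopen, intro ballI)
    fix q assume q: "q \<in> {q \<in> topspace FT. phi f q \<in> T}"
    then have qt: "q \<in> range Inl \<union> Inr ` freudenthal_ends K" "phi f q \<in> T"
      using topspace_FT by auto
    then consider x where "q = Inl x" | e where "q = Inr e" "e \<in> freudenthal_ends K" by blast
    then show "\<exists>W. openin FT W \<and> q \<in> W \<and> W \<subseteq> {q \<in> topspace FT. phi f q \<in> T}"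
    proof cases
      case 1
      let ?V = "ball x 1 \<inter> f -` T"
      have "open (f -` T)" using open_vimage[OF T CF_cont[OF f]] .
      then have "open ?V" by auto
      moreover have "compact (closure ?V)"
        by (rule compact_closure_sub[of _ x 1]) (meson closed_cball closure_minimal ball_subset_cball inf_le1 order_trans)
      ultimately have o: "openin FT (Inl ` ?V)" by (rule open_Inl)
      moreover have "q \<in> Inl ` ?V" using 1 qt(2) unfolding phi_def by auto
      moreover have "Inl ` ?V \<subseteq> {q \<in> topspace FT. phi f q \<in> T}"
        using openin_subset[OF o] unfolding phi_def by auto
      ultimately show ?thesis by blast
    next
      case 2
      obtain \<delta> where d: "\<delta> > 0" "ball (Lim_end e f) \<delta> \<subseteq> T"
        using T qt(2) 2 unfolding phi_def open_contains_ball by auto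
      obtain N where N: "\<forall>i\<ge>N. \<forall>e\<in>freudenthal_ends K. \<forall>x\<in>e i. \<bar>f x - Lim_end e f\<bar> \<le> \<delta>/3"
        using L_approx[OF f, of "\<delta>/3"] d by auto
      have o: "openin FT (nbhd (e N))" by (rule open_nbhd[OF end_comp[OF 2(2)]])
      have "nbhd (e N) \<subseteq> {q \<in> topspace FT. phi f q \<in> T}"
      proof
        fix p assume p: "p \<in> nbhd (e N)"
        then have pt: "p \<in> topspace FT" using openin_subset[OF o] by blast
        from p consider y where "p = Inl y" "y \<in> e N"
          | e' j where "p = Inr e'" "e' \<in> freudenthal_ends K" "e' j = e N"
          unfolding nbhd_def by blast
        then have "phi f p \<in> ball (Lim_end e f) \<delta>"
        proof cases
          case 1
          then have "\<bar>f y - Lim_end e f\<bar> \<le> \<delta>/3" using N 2 by blast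
          then show ?thesis using 1 d unfolding phi_def by (simp add: dist_real_def abs_minus_commute)
        next
          case 3: 2
          let ?k = "max N j"
          obtain y where y: "y \<in> e' ?k" using end_nonempty[OF 3(2)] by blast
          have "y \<in> e N" using end_mono[OF 3(2), of j ?k] 3(3) y by auto
          then have a: "\<bar>f y - Lim_end e f\<bar> \<le> \<delta>/3" using N 2 by blast
          have b: "\<bar>f y - Lim_end e' f\<bar> \<le> \<delta>/3" using N 3(2) y by (meson max.cobounded1)
          have "\<bar>Lim_end e' f - Lim_end e f\<bar> < \<delta>" using a b d by linarith
          then show ?thesis using 3 unfolding phi_def by (simp add: dist_real_def abs_minus_commute)
        qed
        then show "p \<in> {q \<in> topspace FT. phi f q \<in> T}" using pt d by blast
      qed
      moreover have "q \<in> nbhd (e N)" unfolding nbhd_def using 2 by blast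
      ultimately show ?thesis using o by blast
    qed
  qed
qed

lemma CF_embed_top: "CF_embed (x::'a) \<in> topspace CF_cube"
proof -
  have "\<forall>f\<in>CF_functions. f x \<in> {0..1}" using CF_range by blast
  then show ?thesis unfolding CF_cube_def CF_embed_def topspace_product_topology by auto
qed

lemma CF_embed_cont: "continuous_map euclidean CF_cube (CF_embed :: 'a \<Rightarrow> _)"
  unfolding CF_cube_def continuous_map_componentwise
proof (intro conjI ballI)
  show "CF_embed ` topspace euclidean \<subseteq> extensional CF_functions"
    unfolding CF_embed_def by auto
  fix f :: "'a \<Rightarrow> real" assume f: "f \<in> CF_functions"
  have "continuous_map euclidean (top_of_set {0..1}) f"
    using CF_cont[OF f] CF_range[OF f]
    by (simp add: continuous_map_in_subtopology continuous_map_iff_continuous2)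
  then show "continuous_map euclidean (top_of_set {0..1}) (\<lambda>x. CF_embed x f)"
    unfolding CF_embed_def using f by simp
qed

lemma hmap_Inr_closure:
  assumes e: "e \<in> freudenthal_ends K"
  shows "hmap (Inr e) \<in> CF_cube closure_of range CF_embed"
proof (rule limitin_in_closure)
  show "limitin CF_cube (\<lambda>n. CF_embed (SOME x. x \<in> e n)) (hmap (Inr e)) sequentially"
    unfolding CF_cube_def limitin_componentwise
  proof (intro conjI ballI)
    show "hmap (Inr e) \<in> extensional CF_functions" unfolding hmap_def by simp
    show "\<forall>\<^sub>F n in sequentially. CF_embed (SOME x. x \<in> e n) \<in> topspace (product_topology (\<lambda>_. top_of_set {0..1}) CF_functions)"
      using CF_embed_top unfolding CF_cube_def by simp
    fix f :: "'a \<Rightarrow> real" assume f: "f \<in> CF_functions"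
    show "limitin (top_of_set {0..1}) (\<lambda>n. CF_embed (SOME x. x \<in> e n) f) (hmap (Inr e) f) sequentially"
      unfolding limitin_subtopology
      using Lim_end_conv[OF f e] L_range[OF f e] CF_range[OF f] f
      by (simp add: hmap_def CF_embed_def limitin_canonical_iff)
  qed
  show "CF_embed (SOME x. x \<in> e n) \<in> range CF_embed" for n by simp
qed

lemma hmap_top: "q \<in> topspace FT \<Longrightarrow> hmap q \<in> CF_cube closure_of range CF_embed"
proof -
  assume "q \<in> topspace FT"
  then consider x where "q = Inl x" | e where "q = Inr e" "e \<in> freudenthal_ends K"
    using topspace_FT by blast
  then show ?thesis
  proof cases
    case 1
    have "range (CF_embed::'a \<Rightarrow> _) \<subseteq> topspace CF_cube" using CF_embed_top by blast
    then show ?thesis using 1 closure_of_subset unfolding hmap_def by fastforce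
  next
    case 2
    then show ?thesis using hmap_Inr_closure by simp
  qed
qed

lemma topspace_CF: "topspace (coarse_freudenthal_compactification :: (('a \<Rightarrow> real) \<Rightarrow> real) topology)
    = CF_cube closure_of range (CF_embed :: 'a \<Rightarrow> _)"
  unfolding coarse_freudenthal_compactification_def
  using closure_of_subset_topspace[of CF_cube "range (CF_embed :: 'a \<Rightarrow> _)"] by (simp add: inf.absorb2)

lemma hmap_cont: "continuous_map FT (coarse_freudenthal_compactification :: (('a \<Rightarrow> real) \<Rightarrow> real) topology) hmap"
  unfolding coarse_freudenthal_compactification_def continuous_map_in_subtopology
proof (intro conjI)
  show "hmap \<in> topspace FT \<rightarrow> CF_cube closure_of range CF_embed" using hmap_top by blast
  show "continuous_map FT CF_cube hmap"
    unfolding CF_cube_def continuous_map_componentwise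
  proof (intro conjI ballI)
    show "hmap ` topspace FT \<subseteq> extensional CF_functions"
      unfolding hmap_def CF_embed_def by (auto split: sum.splits)
    fix f :: "'a \<Rightarrow> real" assume f: "f \<in> CF_functions"
    have "continuous_map FT (top_of_set {0..1}) (phi f)"
      using phi_cont[OF f] phi_range[OF f] by (simp add: continuous_map_in_subtopology)
    then show "continuous_map FT (top_of_set {0..1}) (\<lambda>x. hmap x f)"
      by (rule continuous_map_eq) (simp add: hmap_phi[OF f])
  qed
qed

end

context FS begin

lemma nbhd_compact:
  fixes C :: "'a set"
  assumes Cc: "compact C" and C: "C \<noteq> {}"
  shows "compact {z. infdist z C \<le> r}"
proof (rule bc_compact)
  have Ccl: "closed C" using Cc compact_imp_closed by blast
  obtain k0 where k0: "k0 \<in> C" using C by blast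
  obtain B where B: "\<forall>y\<in>C. dist k0 y \<le> B" using Cc compact_imp_bounded bounded_any_center by metis
  have "{z. infdist z C \<le> r} \<subseteq> cball k0 (B + r)"
  proof
    fix z assume z: "z \<in> {z. infdist z C \<le> r}"
    obtain y where y: "y \<in> C" "infdist z C = dist z y" using infdist_att[OF Ccl C] by blast
    have "dist k0 z \<le> dist k0 y + dist y z" by (rule dist_triangle)
    then show "z \<in> cball k0 (B + r)" using B y z by (auto simp: dist_commute)
  qed
  then show "bounded {z. infdist z C \<le> r}" using bounded_cball bounded_subset by blast
  show "closed {z. infdist z C \<le> r}"
    by (rule closed_Collect_le) (rule continuous_on_infdist continuous_on_id continuous_on_const)+
qed

lemma L_gfun_one:
  assumes e: "e \<in> freudenthal_ends K" and C: "K i \<noteq> {}"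
  shows "Lim_end e (gfun (e i)) = 1"
proof -
  have cmp: "compact {z. infdist z (K i) \<le> 1}" by (rule nbhd_compact[OF K_compact C])
  obtain N where N: "\<forall>j\<ge>N. {z. infdist z (K i) \<le> 1} \<subseteq> K j" using eventually_contains[OF cmp] by blast
  show ?thesis
  proof (rule L_const[OF gfun_CF[OF end_comp[OF e] K_compact C] e, of "max N i"], intro allI impI ballI)
    fix j z assume j: "max N i \<le> j" and z: "z \<in> e j"
    have "z \<in> e i" using end_mono[OF e, of i j] j z by auto
    moreover have "z \<notin> K j" using end_disj[OF e, of j] z by blast
    then have "z \<notin> {z. infdist z (K i) \<le> 1}" using N j by auto
    then have "infdist z (K i) \<ge> 1" by simp
    ultimately show "gfun (e i) z = 1" using gfun_one[OF end_comp[OF e] K_closed C] by blast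
  qed
qed

lemma L_gfun_zero:
  assumes e: "e \<in> freudenthal_ends K" and U: "U \<in> components (- K i)" and C: "K i \<noteq> {}"
    and ne: "e i \<noteq> U"
  shows "Lim_end e (gfun U) = 0"
proof (rule L_const[OF gfun_CF[OF U K_compact C] e, of i], intro allI impI ballI)
  fix j z assume j: "i \<le> j" and z: "z \<in> e j"
  have "z \<in> e i" using end_mono[OF e j] z by auto
  then have "z \<notin> U" using components_nonoverlap[OF end_comp[OF e] U] ne by blast
  then show "gfun U z = 0" by (rule gfun_outside)
qed

lemma L_bump_zero:
  assumes e: "e \<in> freudenthal_ends K" and r: "r > 0"
  shows "Lim_end e (bump x r) = 0"
proof -
  obtain N where N: "\<forall>i\<ge>N. \<forall>e \<in> freudenthal_ends K. e i \<inter> cball x r = {}"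
    using end_outside[OF cball_compact] by blast
  show ?thesis
  proof (rule L_const[OF bump_CF[OF r] e, of N], intro allI impI ballI)
    fix j z assume "N \<le> j" "z \<in> e j"
    then have "z \<notin> cball x r" using N e by blast
    then show "bump x r z = 0" using bump_zero[OF r] by blast
  qed
qed

lemma hmap_inj: "inj_on hmap (topspace FT)"
proof (rule inj_onI)
  fix p q assume p: "p \<in> topspace FT" and q: "q \<in> topspace FT" and eq: "hmap p = hmap q"
  have key: "\<And>f. f \<in> CF_functions \<Longrightarrow> phi f p = phi f q" using eq hmap_phi by metis
  have Inl_Inr: False if "x' \<in> UNIV" "e' \<in> freudenthal_ends K" "\<And>f. f \<in> CF_functions \<Longrightarrow> f x' = Lim_end e' f" for x' e'
  proof -
    have "bump x' 1 x' = Lim_end e' (bump x' 1)" using that(3)[OF bump_CF] by simp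
    then show False using bump_x[of 1 x'] L_bump_zero[OF that(2), of 1 x'] by simp
  qed
  from p q consider x y where "p = Inl x" "q = Inl y"
    | x e where "p = Inl x" "q = Inr e" "e \<in> freudenthal_ends K"
    | x e where "p = Inr e" "q = Inl x" "e \<in> freudenthal_ends K"
    | e e' where "p = Inr e" "q = Inr e'" "e \<in> freudenthal_ends K" "e' \<in> freudenthal_ends K"
    unfolding topspace_FT by blast
  then show "p = q"
  proof cases
    case 1
    show ?thesis
    proof (rule ccontr)
      assume "p \<noteq> q"
      then have r: "dist x y > 0" using 1 by simp
      have "bump x (dist x y) x = bump x (dist x y) y" using key[OF bump_CF[OF r]] 1 unfolding phi_def by simp
      moreover have "bump x (dist x y) y = 0" unfolding bump_def using r by (simp add: dist_commute)
      ultimately have "bump x (dist x y) x = 0" by simp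
      then show False using bump_x[OF r, of x] by simp
    qed
  next
    case 2
    then show ?thesis using Inl_Inr[of x e] key unfolding phi_def by simp
  next
    case 3
    then show ?thesis using Inl_Inr[of x e] key unfolding phi_def by (metis UNIV_I sum.case)
  next
    case 4
    show ?thesis
    proof (rule ccontr)
      assume "p \<noteq> q"
      then have "e \<noteq> e'" using 4 by auto
      then obtain i where i: "e i \<noteq> e' i" by (meson ext)
      have C: "K i \<noteq> {}"
      proof
        assume "K i = {}"
        then show False using end_comp[OF 4(3), of i] end_comp[OF 4(4), of i] i components_empty by auto
      qed
      have "Lim_end e (gfun (e i)) = Lim_end e' (gfun (e i))"
        using key[OF gfun_CF[OF end_comp[OF 4(3)] K_compact C]] 4 unfolding phi_def by simp
      moreover have "Lim_end e (gfun (e i)) = 1" by (rule L_gfun_one[OF 4(3) C])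
      moreover have "Lim_end e' (gfun (e i)) = 0"
        by (rule L_gfun_zero[OF 4(4) end_comp[OF 4(3)] C]) (use i in auto)
      ultimately show False by simp
    qed
  qed
qed

end

context FS begin

lemma Hausdorff_cube: "Hausdorff_space (CF_cube :: (('a \<Rightarrow> real) \<Rightarrow> real) topology)"
  unfolding CF_cube_def Hausdorff_space_product_topology
  by (simp add: Hausdorff_space_subtopology Hausdorff_space_euclidean)

lemma proj_cont:
  assumes "f \<in> CF_functions"
  shows "continuous_map CF_cube euclideanreal (\<lambda>q. q f)"
proof -
  have "continuous_map CF_cube (top_of_set {0..1}) (\<lambda>q. q f)"
    unfolding CF_cube_def by (rule continuous_map_product_projection[OF assms])
  then show ?thesis by (simp add: continuous_map_in_subtopology)
qed

lemma coord_closure: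
  fixes A :: "'a set"
  assumes p: "p \<in> CF_cube closure_of (CF_embed ` A)" and f: "f \<in> CF_functions"
    and b: "\<forall>x\<in>A. \<bar>f x - c\<bar> \<le> \<epsilon>"
  shows "\<bar>p f - c\<bar> \<le> \<epsilon>"
proof (rule forall_in_closure_of[OF p, of "\<lambda>q. \<bar>q f - c\<bar> \<le> \<epsilon>"])
  fix q assume "q \<in> CF_embed ` A"
  then show "\<bar>q f - c\<bar> \<le> \<epsilon>" using b f unfolding CF_embed_def by auto
next
  have "closedin CF_cube {q \<in> topspace CF_cube. q f \<in> cball c \<epsilon>}"
    by (rule closedin_continuous_map_preimage[OF proj_cont[OF f]]) simp
  moreover have "{q \<in> topspace CF_cube. q f \<in> cball c \<epsilon>} = {q \<in> topspace CF_cube. \<bar>q f - c\<bar> \<le> \<epsilon>}"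
    by (auto simp: dist_real_def abs_minus_commute)
  ultimately show "closedin CF_cube {q \<in> topspace CF_cube. \<bar>q f - c\<bar> \<le> \<epsilon>}" by simp
qed

definition Dset :: "nat \<Rightarrow> 'a set" where
  "Dset i = {z. infdist z (K i) \<le> 1}"

definition Big :: "nat \<Rightarrow> 'a set set" where
  "Big i = {U \<in> components (- K i). \<exists>z\<in>U. infdist z (K i) > 1}"

lemma big_meets:
  assumes C: "K i \<noteq> {}" and U: "U \<in> components (- K i)" and z: "z \<in> U" and d: "infdist z (K i) > 1"
  shows "\<exists>w\<in>U. infdist w (K i) = 1"
proof -
  obtain k where k: "k \<in> K i" "infdist z (K i) = dist z k" using infdist_att[OF K_closed C] by blast
  obtain G w where G: "connected G" "z \<in> G" "w \<in> G" "dist z w = dist z k - 1"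
    "dist w k = dist z k - (dist z k - 1)" "\<forall>v\<in>G. dist z v \<le> dist z k - 1"
    using geo_seg[of "dist z k - 1" z k] d k by auto
  have GC: "G \<subseteq> - K i"
  proof
    fix v assume v: "v \<in> G"
    show "v \<in> - K i"
    proof
      assume "v \<in> K i"
      then have "infdist z (K i) \<le> dist z v" by (rule infdist_le)
      then show False using G(6) v k by fastforce
    qed
  qed
  have "G \<subseteq> U" using components_maximal[OF U G(1) GC] G(2) z by blast
  moreover have "infdist w (K i) \<le> 1" using infdist_le[OF k(1), of w] G(5) by simp
  moreover have "infdist z (K i) \<le> infdist w (K i) + dist z w" by (rule infdist_triangle)
  then have "infdist w (K i) \<ge> 1" using G(4) k by simp
  ultimately show ?thesis using G(3) by force
qed

lemma big_finite:
  assumes C: "K i \<noteq> {}"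
  shows "finite (Big i)"
proof -
  let ?E = "{z. infdist z (K i) = 1}"
  have "?E \<subseteq> Dset i" unfolding Dset_def by auto
  moreover have "closed ?E"
    by (rule closed_Collect_eq) (rule continuous_on_infdist continuous_on_id continuous_on_const)+
  ultimately have cE: "compact ?E" using nbhd_compact[OF K_compact C, of 1] unfolding Dset_def
    using compact_Int_closed inf.absorb2 by metis
  have "?E \<subseteq> \<Union>(components (- K i))"
  proof
    fix z assume "z \<in> ?E"
    then have "z \<notin> K i" using infdist_zero by force
    then show "z \<in> \<Union>(components (- K i))" by (simp add: Union_components)
  qed
  moreover have "\<forall>U\<in>components (- K i). open U"
    using open_component[of "- K i"] K_closed[of i] by (simp add: open_Compl)
  ultimately obtain F where F: "F \<subseteq> components (- K i)" "finite F" "?E \<subseteq> \<Union>F"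
    using compactE[OF cE] by metis
  have "Big i \<subseteq> F"
  proof
    fix U assume "U \<in> Big i"
    then have U: "U \<in> components (- K i)" and "\<exists>z\<in>U. infdist z (K i) > 1" unfolding Big_def by auto
    then obtain w where w: "w \<in> U" "infdist w (K i) = 1" using big_meets[OF C] by blast
    then obtain U' where U': "U' \<in> F" "w \<in> U'" using F(3) by blast
    then have "U \<inter> U' \<noteq> {}" using w by blast
    then have "U = U'" using components_nonoverlap[OF U] F(1) U' by blast
    then show "U \<in> F" using U' by simp
  qed
  then show ?thesis using F(2) finite_subset by blast
qed

lemma p_in_big:
  assumes C: "K i \<noteq> {}" and p: "p \<in> CF_cube closure_of range (CF_embed :: 'a \<Rightarrow> _)"
    and np: "p \<notin> range (CF_embed :: 'a \<Rightarrow> _)"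
  shows "\<exists>U\<in>components (- K i). p \<in> CF_cube closure_of (CF_embed ` (U - Dset i))"
proof -
  let ?F = "insert (CF_embed ` Dset i) ((\<lambda>U. CF_embed ` (U - Dset i)) ` Big i)"
  have "range (CF_embed :: 'a \<Rightarrow> _) = \<Union>?F"
  proof
    show "range CF_embed \<subseteq> \<Union>?F"
    proof
      fix q assume "q \<in> range (CF_embed :: 'a \<Rightarrow> _)"
      then obtain z :: 'a where z: "q = CF_embed z" by blast
      show "q \<in> \<Union>?F"
      proof (cases "z \<in> Dset i")
        case True then show ?thesis using z by blast
      next
        case False
        then have d: "infdist z (K i) > 1" unfolding Dset_def by simp
        then have "z \<notin> K i" using infdist_zero by force
        then obtain U where U: "U \<in> components (- K i)" "z \<in> U"
          using Union_components[of "- K i"] by blast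
        then have "U \<in> Big i" unfolding Big_def using d by blast
        then show ?thesis using z U False by blast
      qed
    qed
  qed auto
  moreover have "finite ?F" using big_finite[OF C] by simp
  ultimately have cl: "CF_cube closure_of range CF_embed = \<Union>((closure_of) CF_cube ` ?F)"
    using closure_of_Union by metis
  have "compactin euclidean (Dset i)"
    using nbhd_compact[OF K_compact C] unfolding Dset_def compactin_euclidean_iff by blast
  then have "compactin CF_cube (CF_embed ` Dset i)" by (rule image_compactin[OF _ CF_embed_cont])
  then have "CF_cube closure_of (CF_embed ` Dset i) = CF_embed ` Dset i"
    using compactin_imp_closedin[OF Hausdorff_cube] closure_of_closedin by blast
  then have "p \<notin> CF_cube closure_of (CF_embed ` Dset i)" using np by blast
  then show ?thesis using p cl unfolding Big_def by auto
qed

lemma p_uniq: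
  assumes C: "K i \<noteq> {}" and U: "U \<in> components (- K i)" and U': "U' \<in> components (- K i)"
    and pU: "p \<in> CF_cube closure_of (CF_embed ` (U - Dset i))"
    and pU': "p \<in> CF_cube closure_of (CF_embed ` (U' - Dset i))"
  shows "U = U'"
proof (rule ccontr)
  assume ne: "U \<noteq> U'"
  have g: "gfun U \<in> CF_functions" by (rule gfun_CF[OF U K_compact C])
  have "\<bar>p (gfun U) - 1\<bar> \<le> 0"
  proof (rule coord_closure[OF pU g], intro ballI)
    fix x assume "x \<in> U - Dset i"
    then show "\<bar>gfun U x - 1\<bar> \<le> 0" using gfun_one[OF U K_closed C, of x] unfolding Dset_def by simp
  qed
  moreover have "\<bar>p (gfun U) - 0\<bar> \<le> 0"
  proof (rule coord_closure[OF pU' g], intro ballI)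
    fix x assume "x \<in> U' - Dset i"
    then have "x \<notin> U" using components_nonoverlap[OF U U'] ne by blast
    then show "\<bar>gfun U x - 0\<bar> \<le> 0" using gfun_outside by simp
  qed
  ultimately show False by simp
qed

lemma hmap_surj_aux:
  assumes p: "p \<in> CF_cube closure_of range (CF_embed :: 'a \<Rightarrow> _)"
  shows "p \<in> hmap ` topspace FT"
proof (cases "p \<in> range (CF_embed :: 'a \<Rightarrow> _)")
  case True
  then obtain x :: 'a where "p = CF_embed x" by blast
  then have "p = hmap (Inl x)" unfolding hmap_def by simp
  moreover have "Inl x \<in> topspace FT" unfolding topspace_FT by blast
  ultimately show ?thesis by blast
next
  case np: False
  define sel where "sel i = (if K i = {} then UNIV
     else THE U. U \<in> components (- K i) \<and> p \<in> CF_cube closure_of (CF_embed ` (U - Dset i)))" for i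
  have sel: "sel i \<in> components (- K i) \<and> (K i \<noteq> {} \<longrightarrow> p \<in> CF_cube closure_of (CF_embed ` (sel i - Dset i)))" for i
  proof (cases "K i = {}")
    case True then show ?thesis unfolding sel_def using components_empty by simp
  next
    case False
    obtain U where U: "U \<in> components (- K i)" "p \<in> CF_cube closure_of (CF_embed ` (U - Dset i))"
      using p_in_big[OF False p np] by blast
    have "sel i = (THE U. U \<in> components (- K i) \<and> p \<in> CF_cube closure_of (CF_embed ` (U - Dset i)))"
      unfolding sel_def using False by simp
    also have "\<dots> = U"
      by (rule the_equality) (use U p_uniq[OF False] in blast)+
    finally have "sel i = U" .
    then show ?thesis using U by simp
  qed
  have mono: "sel (Suc i) \<subseteq> sel i" for i
  proof (cases "K i = {}")
    case True then show ?thesis unfolding sel_def by simp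
  next
    case False
    then have C': "K (Suc i) \<noteq> {}" using K_mono[of i "Suc i"] by auto
    have s1: "sel (Suc i) \<in> components (- K (Suc i))" using sel by blast
    have sub: "sel (Suc i) \<subseteq> - K i" using in_components_subset[OF s1] K_mono[of i "Suc i"] by auto
    have nes: "sel (Suc i) \<noteq> {}" using in_components_nonempty[OF s1] .
    then obtain V where V: "V \<in> components (- K i)" "sel (Suc i) \<subseteq> V"
      using exists_component_superset[OF sub _ in_components_connected[OF s1]] sub by blast
    have "sel (Suc i) - Dset (Suc i) \<subseteq> V - Dset i"
    proof
      fix z assume z: "z \<in> sel (Suc i) - Dset (Suc i)"
      have "infdist z (K (Suc i)) \<le> infdist z (K i)" using infdist_mono[OF K_mono False] by simp
      then show "z \<in> V - Dset i" using z V unfolding Dset_def by auto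
    qed
    then have "CF_cube closure_of (CF_embed ` (sel (Suc i) - Dset (Suc i))) \<subseteq> CF_cube closure_of (CF_embed ` (V - Dset i))"
      by (intro closure_of_mono image_mono)
    moreover have "p \<in> CF_cube closure_of (CF_embed ` (sel (Suc i) - Dset (Suc i)))"
      using sel[of "Suc i"] C' by blast
    ultimately have "p \<in> CF_cube closure_of (CF_embed ` (V - Dset i))" by blast
    then have "V = sel i" using p_uniq[OF False V(1)] sel[of i] False by blast
    then show ?thesis using V by simp
  qed
  have e: "sel \<in> freudenthal_ends K" unfolding freudenthal_ends_def using sel mono by blast
  have eq: "p f = Lim_end sel f" if f: "f \<in> CF_functions" for f
  proof -
    have bd: "\<bar>p f - Lim_end sel f\<bar> \<le> \<epsilon>" if eps: "\<epsilon> > 0" for \<epsilon>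
    proof -
      obtain N where N: "\<forall>i\<ge>N. \<forall>e\<in>freudenthal_ends K. \<forall>x\<in>e i. \<bar>f x - Lim_end e f\<bar> \<le> \<epsilon>"
        using L_approx[OF f eps] by blast
      obtain N' where N': "\<forall>i\<ge>N'. K i \<noteq> {}" using K_nonempty_eventually by blast
      let ?i = "max N N'"
      have C: "K ?i \<noteq> {}" using N' by simp
      show ?thesis
      proof (rule coord_closure[OF _ f])
        show "p \<in> CF_cube closure_of (CF_embed ` (sel ?i - Dset ?i))" using sel[of ?i] C by blast
        show "\<forall>x\<in>sel ?i - Dset ?i. \<bar>f x - Lim_end sel f\<bar> \<le> \<epsilon>" using N e by (meson DiffD1 max.cobounded1)
      qed
    qed
    show ?thesis
    proof (rule ccontr)
      assume "p f \<noteq> Lim_end sel f"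
      then have "\<bar>p f - Lim_end sel f\<bar> > 0" by simp
      then show False using bd[of "\<bar>p f - Lim_end sel f\<bar> / 2"] by simp
    qed
  qed
  have "p \<in> topspace CF_cube" using p closure_of_subset_topspace[of CF_cube "range (CF_embed::'a \<Rightarrow> _)"] by blast
  then have pe: "p \<in> extensional CF_functions"
    unfolding CF_cube_def topspace_product_topology by (simp add: PiE_iff)
  have "p = hmap (Inr sel)"
  proof
    fix f
    show "p f = hmap (Inr sel) f"
    proof (cases "f \<in> CF_functions")
      case True then show ?thesis using eq unfolding hmap_def by simp
    next
      case False then show ?thesis using pe unfolding hmap_def by (simp add: extensional_def)
    qed
  qed
  moreover have "Inr sel \<in> topspace FT" unfolding topspace_FT using e by blast
  ultimately show ?thesis by blast
qed

lemma hmap_surj: "hmap ` topspace FT = topspace (coarse_freudenthal_compactification :: (('a \<Rightarrow> real) \<Rightarrow> real) topology)"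
  unfolding topspace_CF using hmap_top hmap_surj_aux by blast

end

context FS begin

abbreviation "CFT \<equiv> (coarse_freudenthal_compactification :: (('a \<Rightarrow> real) \<Rightarrow> real) topology)"

lemma open_via_fun:
  assumes g: "g \<in> CF_functions" and B: "\<forall>q'\<in>topspace FT. phi g q' > c \<longrightarrow> q' \<in> B"
    and q: "q \<in> topspace FT" and gq: "phi g q > c"
  shows "\<exists>W. openin CFT W \<and> hmap q \<in> W \<and> W \<subseteq> hmap ` B"
proof (intro exI conjI)
  let ?W = "{p \<in> topspace CFT. p g \<in> {c<..}}"
  have "continuous_map CFT euclideanreal (\<lambda>p. p g)"
    unfolding coarse_freudenthal_compactification_def
    by (rule continuous_map_from_subtopology[OF proj_cont[OF g]])
  then show "openin CFT ?W" by (rule openin_continuous_map_preimage) simp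
  show "hmap q \<in> ?W" using hmap_surj q gq hmap_phi[OF g] by auto
  show "?W \<subseteq> hmap ` B"
  proof
    fix p assume p: "p \<in> ?W"
    then obtain q' where q': "q' \<in> topspace FT" "p = hmap q'" using hmap_surj by blast
    then have "phi g q' > c" using p hmap_phi[OF g] by auto
    then show "p \<in> hmap ` B" using B q' by blast
  qed
qed

lemma basis_image_open:
  assumes B: "B \<in> freudenthal_basis K"
  shows "openin CFT (hmap ` B)"
proof -
  have Btop: "B \<subseteq> topspace FT" using basis_open[OF B] openin_subset by blast
  from B consider V where "B = Inl ` V" "open V"
    | U i where "B = nbhd U" "U \<in> components (- K i)"
    unfolding freudenthal_basis_def nbhd_def by blast
  then show ?thesis
  proof cases
    case 1
    show ?thesis
    proof (subst openin_subopen, intro ballI)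
      fix y assume "y \<in> hmap ` B"
      then obtain x where x: "x \<in> V" "y = hmap (Inl x)" using 1 by blast
      obtain r where r: "r > 0" "ball x r \<subseteq> V" using 1(2) x(1) open_contains_ball by blast
      have "\<exists>W. openin CFT W \<and> hmap (Inl x) \<in> W \<and> W \<subseteq> hmap ` B"
      proof (rule open_via_fun[OF bump_CF[OF r(1)], of 0])
        show "Inl x \<in> topspace FT" using Btop x 1 by blast
        show "phi (bump x r) (Inl x) > 0" unfolding phi_def using bump_x[OF r(1), of x] by simp
        show "\<forall>q'\<in>topspace FT. 0 < phi (bump x r) q' \<longrightarrow> q' \<in> B"
        proof (intro ballI impI)
          fix q' assume q': "q' \<in> topspace FT" "0 < phi (bump x r) q'"
          then consider z where "q' = Inl z" | e where "q' = Inr e" "e \<in> freudenthal_ends K"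
            unfolding topspace_FT by blast
          then show "q' \<in> B"
          proof cases
            case a1: 1
            then have "dist z x < r" using bump_pos q'(2) r(1) unfolding phi_def by simp
            then have "z \<in> V" using r(2) by (auto simp: dist_commute)
            then show ?thesis using 1 a1 by blast
          next
            case 2
            then show ?thesis using q'(2) L_bump_zero[OF 2(2) r(1)] unfolding phi_def by simp
          qed
        qed
      qed
      then show "\<exists>W. openin CFT W \<and> y \<in> W \<and> W \<subseteq> hmap ` B" using x by simp
    qed
  next
    case 2
    show ?thesis
    proof (cases "K i = {}")
      case True
      then have "U = UNIV" using 2(2) components_empty by simp
      have "topspace FT \<subseteq> B"
      proof
        fix q assume "q \<in> topspace FT"
        then consider z where "q = Inl z" | e where "q = Inr e" "e \<in> freudenthal_ends K"
          unfolding topspace_FT by blast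
        then show "q \<in> B"
        proof cases
          case 1 then show ?thesis using 2 \<open>U = UNIV\<close> unfolding nbhd_def by blast
        next
          case 3: 2
          have "e i = UNIV" using end_comp[OF 3(2), of i] True components_empty by simp
          then show ?thesis using 2 3 \<open>U = UNIV\<close> unfolding nbhd_def by blast
        qed
      qed
      then have "hmap ` B = topspace CFT" using Btop hmap_surj by blast
      then show ?thesis by simp
    next
      case C: False
      have g: "gfun U \<in> CF_functions" by (rule gfun_CF[OF 2(2) K_compact C])
      have Bchar: "\<forall>q'\<in>topspace FT. c < phi (gfun U) q' \<longrightarrow> q' \<in> B" if c: "c \<ge> 0" for c
      proof (intro ballI impI)
        fix q' assume q': "q' \<in> topspace FT" "c < phi (gfun U) q'"
        then consider z where "q' = Inl z" | e where "q' = Inr e" "e \<in> freudenthal_ends K"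
          unfolding topspace_FT by blast
        then show "q' \<in> B"
        proof cases
          case 1
          then have "gfun U z \<noteq> 0" using q'(2) c unfolding phi_def by simp
          then have "z \<in> U" using gfun_outside by blast
          then show ?thesis using 1 2 unfolding nbhd_def by blast
        next
          case 3: 2
          have "e i = U"
          proof (rule ccontr)
            assume "e i \<noteq> U"
            then have "Lim_end e (gfun U) = 0" by (rule L_gfun_zero[OF 3(2) 2(2) C])
            then show False using q'(2) c 3 unfolding phi_def by simp
          qed
          then show ?thesis using 2 3 unfolding nbhd_def by blast
        qed
      qed
      show ?thesis
      proof (subst openin_subopen, intro ballI)
        fix y assume "y \<in> hmap ` B"
        then obtain q where q: "q \<in> B" "y = hmap q" by blast
        then have qt: "q \<in> topspace FT" using Btop by blast
        from q(1) consider z where "q = Inl z" "z \<in> U"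
          | e j where "q = Inr e" "e \<in> freudenthal_ends K" "e j = U"
          using 2(1) unfolding nbhd_def by blast
        then have "\<exists>W. openin CFT W \<and> hmap q \<in> W \<and> W \<subseteq> hmap ` B"
        proof cases
          case 1
          have pos: "gfun U z > 0" by (rule gfun_pos[OF 2(2) K_closed C 1(2)])
          show ?thesis
          proof (rule open_via_fun[OF g Bchar qt])
            show "0 \<le> gfun U z / 2" using pos by simp
            show "gfun U z / 2 < phi (gfun U) q" using pos 1 unfolding phi_def by simp
          qed
        next
          case 3: 2
          have Cj: "K j \<noteq> {}"
          proof
            assume "K j = {}"
            then have "U = UNIV" using end_comp[OF 3(2), of j] 3(3) components_empty by simp
            then show False using in_components_subset[OF 2(2)] C by auto
          qed
          have "Lim_end e (gfun U) = 1" using L_gfun_one[OF 3(2) Cj] 3(3) by simp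
          then show ?thesis
            by (intro open_via_fun[OF g Bchar[of "1/2"] qt]) (use 3 in \<open>auto simp: phi_def\<close>)
        qed
        then show "\<exists>W. openin CFT W \<and> y \<in> W \<and> W \<subseteq> hmap ` B" using q by simp
      qed
    qed
  qed
qed

lemma hmap_open: "open_map FT CFT hmap"
  unfolding open_map_def
proof (intro allI impI)
  fix U assume "openin FT U"
  then have "generate_topology_on (freudenthal_basis K) U"
    unfolding freudenthal_compactification_def by (simp add: openin_topology_generated_by_iff)
  then show "openin CFT (hmap ` U)"
  proof (induction rule: generate_topology_on.induct)
    case Empty then show ?case by simp
  next
    case (Int a b)
    have "openin FT a" "openin FT b"
      using Int.hyps unfolding freudenthal_compactification_def
      by (simp_all add: openin_topology_generated_by_iff)
    then have "a \<subseteq> topspace FT" "b \<subseteq> topspace FT" using openin_subset by blast+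
    then have "hmap ` (a \<inter> b) = hmap ` a \<inter> hmap ` b"
      using inj_on_image_Int[OF hmap_inj] by blast
    then show ?case using Int.IH by (simp add: openin_Int)
  next
    case (UN F)
    have "hmap ` \<Union>F = \<Union>((`) hmap ` F)" by blast
    then show ?case using UN.IH by (auto intro: openin_Union)
  next
    case (Basis s) then show ?case by (rule basis_image_open)
  qed
qed

lemma main: "homeomorphic_map FT CFT hmap"
  by (rule bijective_open_imp_homeomorphic_map[OF hmap_cont hmap_open hmap_surj hmap_inj])

end

theorem corollary4p7:
  fixes K :: "nat \<Rightarrow> 'a::metric_space set"
  assumes "proper_metric_space TYPE('a)"
    and "geodesic_metric_space TYPE('a)"
    and "exhaustion K"
  shows "\<exists>h. homeomorphic_map (freudenthal_compactification K)
                (coarse_freudenthal_compactification :: (('a \<Rightarrow> real) \<Rightarrow> real) topology) h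
           \<and> (\<forall>x. h (Inl x) = CF_embed x)"
proof -
  interpret FS K using assms by unfold_locales
  show ?thesis
    by (intro exI[of _ hmap] conjI main allI) (simp add: hmap_def)
qed


end
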